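(* Let $A\in(0,1)$, $M<0$, $Q>0$, $S>0$ and consider the planar system $$\frac{du}{d\tau}=u^2\big((u+A)(1-u)(u-M)-Qv\big),\qquad \frac{dv}{d\tau}=S(u+A)(u-v)v .$$ Put $T=1-A+M$, and let $P=(\tilde u,\tilde u)$ with $\tilde u>0$ be a positive equilibrium of the system. Define $$f(\tilde u)=\frac{\tilde u\big((1-\tilde u)(\tilde u-M)+(\tilde u+A)(1-2\tilde u+M)\big)}{A+\tilde u}.$$ Then $P$ is: (i) a saddle point if $\tilde u^2(2\tilde u-T)-AM<0$; (ii) a repeller if $\tilde u^2(2\tilde u-T)-AM>0$ and $S<f(\tilde u)$; (iii) an attractor if $\tilde u^2(2\tilde u-T)-AM>0$ and $S>f(\tilde u)$.
   Context: The positive equilibria of the system are exactly the points $(u,u)$ with $u>0$ and $(u+A)(1-u)(u-M)=Qu$. *)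

theory Defs
  imports "HOL-Analysis.Analysis"
begin

definition vfield :: "real \<Rightarrow> real \<Rightarrow> real \<Rightarrow> real \<Rightarrow> real \<times> real \<Rightarrow> real \<times> real" where
  "vfield A M Q S p = (let u = fst p; v = snd p in
     (u^2 * ((u + A) * (1 - u) * (u - M) - Q * v), S * (u + A) * (u - v) * v))"

definition jac :: "(real \<times> real \<Rightarrow> real \<times> real) \<Rightarrow> real \<times> real \<Rightarrow> nat \<Rightarrow> nat \<Rightarrow> real" where
  "jac F p i j =
     (let g = (if i = 1 then (\<lambda>q. fst (F q)) else (\<lambda>q. snd (F q))) in
      if j = 1 then deriv (\<lambda>x. g (x, snd p)) (fst p)
      else deriv (\<lambda>y. g (fst p, y)) (snd p))"

definition jac_eigenvalue :: "(real \<times> real \<Rightarrow> real \<times> real) \<Rightarrow> real \<times> real \<Rightarrow> complex \<Rightarrow> bool" where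
  "jac_eigenvalue F p z \<longleftrightarrow>
     (complex_of_real (jac F p 1 1) - z) * (complex_of_real (jac F p 2 2) - z)
       - complex_of_real (jac F p 1 2) * complex_of_real (jac F p 2 1) = 0"

definition saddle_point :: "(real \<times> real \<Rightarrow> real \<times> real) \<Rightarrow> real \<times> real \<Rightarrow> bool" where
  "saddle_point F p \<longleftrightarrow> F p = (0, 0) \<and>
     (\<exists>l1 l2 :: real. l1 < 0 \<and> 0 < l2 \<and> jac_eigenvalue F p (complex_of_real l1)
        \<and> jac_eigenvalue F p (complex_of_real l2))"

definition repeller :: "(real \<times> real \<Rightarrow> real \<times> real) \<Rightarrow> real \<times> real \<Rightarrow> bool" where
  "repeller F p \<longleftrightarrow> F p = (0, 0) \<and> (\<forall>z. jac_eigenvalue F p z \<longrightarrow> Re z > 0)"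

definition attractor :: "(real \<times> real \<Rightarrow> real \<times> real) \<Rightarrow> real \<times> real \<Rightarrow> bool" where
  "attractor F p \<longleftrightarrow> F p = (0, 0) \<and> (\<forall>z. jac_eigenvalue F p z \<longrightarrow> Re z < 0)"

end

theory Submission
  imports Defs
begin

lemma char_eq:
  fixes a b c d :: real and z :: complex
  shows "(complex_of_real a - z) * (complex_of_real d - z) - complex_of_real b * complex_of_real c = 0
    \<longleftrightarrow> Re z ^ 2 - Im z ^ 2 - (a + d) * Re z + (a*d - b*c) = 0 \<and> Im z * (2 * Re z - (a + d)) = 0"
  by (simp add: complex_eq_iff algebra_simps power2_eq_square)

lemma pos_re:
  fixes x y t D :: real
  assumes "x ^ 2 - y ^ 2 - t * x + D = 0" "y * (2 * x - t) = 0" "D > 0" "t > 0"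
  shows "x > 0"
proof (cases "y = 0")
  case True
  then have "t * x = x^2 + D" using assms by simp
  moreover have "x^2 + D > 0" using assms(3) by (simp add: add_nonneg_pos)
  ultimately show ?thesis using assms(4) by (metis zero_less_mult_pos)
next
  case False
  then show ?thesis using assms by simp
qed

lemma neg_re:
  fixes x y t D :: real
  assumes "x ^ 2 - y ^ 2 - t * x + D = 0" "y * (2 * x - t) = 0" "D > 0" "t < 0"
  shows "x < 0"
proof -
  have "(-x) ^ 2 - y ^ 2 - (-t) * (-x) + D = 0" "y * (2 * (-x) - (-t)) = 0"
    using assms(1,2) by (simp add: algebra_simps, auto)
  from pos_re[OF this] assms(3,4) show ?thesis by simp
qed

lemma d11: "((\<lambda>x. x^2 * ((x + A) * (1 - x) * (x - M) - Q * v)) has_real_derivative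
   (2*u*((u + A) * (1 - u) * (u - M) - Q * v) + u^2 * ((1 - u) * (u - M) + (u + A) * (1 - 2 * u + M)))) (at u)"
  by (rule derivative_eq_intros refl | simp)+ (simp add: algebra_simps power2_eq_square)

theorem lemma3:
  fixes A M Q S u :: real
  assumes "0 < A" "A < 1" "M < 0" "Q > 0" "S > 0"
    and "u > 0" and "vfield A M Q S (u, u) = (0, 0)"
  defines "T \<equiv> 1 - A + M"
    and "f \<equiv> u * ((1 - u) * (u - M) + (u + A) * (1 - 2 * u + M)) / (A + u)"
  shows "(u^2 * (2 * u - T) - A * M < 0 \<longrightarrow> saddle_point (vfield A M Q S) (u, u))
       \<and> (u^2 * (2 * u - T) - A * M > 0 \<and> S < f \<longrightarrow> repeller (vfield A M Q S) (u, u))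
       \<and> (u^2 * (2 * u - T) - A * M > 0 \<and> S > f \<longrightarrow> attractor (vfield A M Q S) (u, u))"
proof -
  define F where "F = vfield A M Q S"
  define g' where "g' = (1 - u) * (u - M) + (u + A) * (1 - 2 * u + M)"
  have eq: "(u + A) * (1 - u) * (u - M) = Q * u"
    using assms(7) \<open>u > 0\<close> by (simp add: vfield_def)
  have j11: "jac F (u,u) 1 1 = u^2 * g'"
  proof -
    have "deriv (\<lambda>x. x^2 * ((x + A) * (1 - x) * (x - M) - Q * u)) u
       = 2*u*((u + A) * (1 - u) * (u - M) - Q * u) + u^2 * g'"
      unfolding g'_def by (rule DERIV_imp_deriv[OF d11])
    then show ?thesis using eq by (simp add: jac_def F_def vfield_def)
  qed
  have j12: "jac F (u,u) 1 2 = - Q * u^2"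
  proof -
    have "((\<lambda>y. u^2 * ((u + A) * (1 - u) * (u - M) - Q * y)) has_real_derivative - Q * u^2) (at u)"
      by (rule derivative_eq_intros refl | simp)+
    then show ?thesis by (simp add: jac_def F_def vfield_def DERIV_imp_deriv)
  qed
  have j21: "jac F (u,u) 2 1 = S * (u + A) * u"
  proof -
    have "((\<lambda>x. S * (x + A) * (x - u) * u) has_real_derivative S * (u + A) * u) (at u)"
      by (rule derivative_eq_intros refl | simp)+
    then show ?thesis by (simp add: jac_def F_def vfield_def DERIV_imp_deriv)
  qed
  have j22: "jac F (u,u) 2 2 = - S * (u + A) * u"
  proof -
    have "((\<lambda>y. S * (u + A) * (u - y) * y) has_real_derivative - S * (u + A) * u) (at u)"
      by (rule derivative_eq_intros refl | simp)+
    then show ?thesis by (simp add: jac_def F_def vfield_def DERIV_imp_deriv)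
  qed
  define t where "t = u^2 * g' - S * (u + A) * u"
  define D where "D = S * (u + A) * u^2 * (u^2 * (2 * u - T) - A * M)"
  have Deq: "jac F (u,u) 1 1 * jac F (u,u) 2 2 - jac F (u,u) 1 2 * jac F (u,u) 2 1 = D"
  proof -
    have "Q * u = (u + A) * (1 - u) * (u - M)" using eq by simp
    then have "u^2 * (Q * u) = u^2 * ((u + A) * (1 - u) * (u - M))" by simp
    then have "Q * u^3 = u^2 * ((u + A) * (1 - u) * (u - M))" by (simp add: power3_eq_cube power2_eq_square mult_ac)
    note Qu = this
    have "jac F (u,u) 1 1 * jac F (u,u) 2 2 - jac F (u,u) 1 2 * jac F (u,u) 2 1
        = S*(u+A)*(Q*u^3 - u^3*g')" unfolding j11 j12 j21 j22
      by (simp add: algebra_simps power3_eq_cube power2_eq_square)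
    also have "\<dots> = S*(u+A)*(u^2 * ((u + A) * (1 - u) * (u - M)) - u^3*g')" by (simp only: Qu)
    also have "\<dots> = D" unfolding D_def g'_def T_def
      by (simp add: algebra_simps power3_eq_cube power2_eq_square)
    finally show ?thesis .
  qed
  have teq: "jac F (u,u) 1 1 + jac F (u,u) 2 2 = t" unfolding j11 j22 t_def by simp
  have ev: "jac_eigenvalue F (u,u) z \<longleftrightarrow> Re z ^ 2 - Im z ^ 2 - t * Re z + D = 0 \<and> Im z * (2 * Re z - t) = 0" for z
    unfolding jac_eigenvalue_def char_eq teq Deq ..
  have uA: "u + A > 0" using assms by simp
  have tf: "t = u * (A + u) * (f - S)"
    unfolding t_def f_def g'_def using uA by (simp add: field_simps power2_eq_square)
  have Dsign: "D > 0 \<longleftrightarrow> u^2 * (2 * u - T) - A * M > 0" "D < 0 \<longleftrightarrow> u^2 * (2 * u - T) - A * M < 0"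
    unfolding D_def using uA assms by (simp_all add: zero_less_mult_iff mult_less_0_iff)
  have F0: "F (u,u) = (0,0)" using assms(7) F_def by simp
  show ?thesis
  proof (intro conjI impI)
    assume h: "u^2 * (2 * u - T) - A * M < 0"
    then have "D < 0" using Dsign by simp
    define s where "s = sqrt (t^2 - 4*D)"
    have "0 \<le> t^2" by simp
    then have s2: "s^2 = t^2 - 4*D" unfolding s_def using \<open>D < 0\<close> by (intro real_sqrt_pow2) linarith
    have "t^2 < s^2" using s2 \<open>D<0\<close> by simp
    moreover have "s \<ge> 0" unfolding s_def
      by (rule real_sqrt_ge_zero, smt (verit) \<open>D<0\<close> zero_le_power2)
    ultimately have st: "\<bar>t\<bar> < s" using power2_less_imp_less[of "\<bar>t\<bar>" s] by simp
    have root: "jac_eigenvalue F (u,u) (complex_of_real ((t + k * s) / 2))" if "k = 1 \<or> k = -1" for k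
      unfolding ev using that s2 by (auto simp: power2_eq_square field_simps)
    show "saddle_point (vfield A M Q S) (u, u)"
      unfolding saddle_point_def F_def[symmetric]
      apply (rule conjI[OF F0])
      apply (rule exI[of _ "(t - s) / 2"], rule exI[of _ "(t + s) / 2"])
      using root[of "-1"] root[of 1] st by auto
  next
    assume h: "u^2 * (2 * u - T) - A * M > 0 \<and> S < f"
    then have "D > 0" "t > 0" using Dsign tf uA assms by auto
    then show "repeller (vfield A M Q S) (u, u)"
      unfolding repeller_def F_def[symmetric] using F0 ev pos_re by blast
  next
    assume h: "u^2 * (2 * u - T) - A * M > 0 \<and> S > f"
    then have "D > 0" "t < 0" using Dsign tf uA assms by (auto simp: mult_pos_neg)
    then show "attractor (vfield A M Q S) (u, u)"
      unfolding attractor_def F_def[symmetric] using F0 ev neg_re by blast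
  qed
qed

end
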